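(* Let $\mathcal{H}_1=(\mathcal{A}_1,\Delta_{\mathcal{A}_1},S_{\mathcal{A}_1},\varepsilon_{\mathcal{A}_1})$ and $\mathcal{H}_2=(\mathcal{A}_2,\Delta_{\mathcal{A}_2},S_{\mathcal{A}_2},\varepsilon_{\mathcal{A}_2})$ be Hopf algebras over a field $k$, $\mathcal{B}$ a unital $k$-algebra, and $\alpha:\mathcal{A}_1\to\mathcal{B}\otimes\mathcal{A}_2$ a quantum family of homomorphisms from $\mathcal{H}_1$ to $\mathcal{H}_2$. Then for all $a,a'\in\mathcal{A}_1$, \[\alpha(a)_{12}\,\alpha(a')_{13}=\alpha(a')_{13}\,\alpha(a)_{12}\quad\text{in }\mathcal{B}\otimes\mathcal{A}_2\otimes\mathcal{A}_2.\]
   Context: Sweedler notation $\Delta(a)=a_{(1)}\otimes a_{(2)}$. For $x\in\mathcal{B}\otimes\mathcal{A}_2$, $x_{12}$ and $x_{13}$ denote $x$ placed in legs (1,2), resp. (1,3), of $\mathcal{B}\otimes\mathcal{A}_2\otimes\mathcal{A}_2$ with $\mathds{1}$ in the remaining leg. Definition: a unital algebra homomorphism $\alpha:\mathcal{A}_1\to\mathcal{B}\otimes\mathcal{A}_2$ is a quantum family of homomorphisms from $\mathcal{H}_1$ to $\mathcal{H}_2$ if $\alpha(a_{(1)})_{12}\alpha(a_{(2)})_{13}=(\mathrm{id}_{\mathcal{B}}\otimes\Delta_{\mathcal{A}_2})(\alpha(a))$ for all $a\in\mathcal{A}_1$. *)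

theory Defs
  imports Main
begin

text \<open>A k-vector space / k-algebra is modelled on a whole type whose
ring structure comes from the type class and whose scalar multiplication by the
field 'k is an explicit function. Tensor products V \<otimes> W are modelled by
formal sums: a finite list xs of pairs (v,w) stands for the element
sum of v \<otimes> w over xs (scalars are absorbed into the first factor). Two
lists represent the same element of V \<otimes> W iff the difference of their
images in the free k-vector space on V \<times> W lies in the k-span of the
bilinearity relations (the standard construction of the tensor product).\<close>

definition kalg :: "('k::field \<Rightarrow> 'a::ring \<Rightarrow> 'a) \<Rightarrow> bool" where
  "kalg sm \<longleftrightarrow>
     (\<forall>c x y. sm c (x + y) = sm c x + sm c y) \<and>
     (\<forall>c d x. sm (c + d) x = sm c x + sm d x) \<and>
     (\<forall>c d x. sm (c * d) x = sm c (sm d x)) \<and>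
     (\<forall>x. sm 1 x = x) \<and>
     (\<forall>c x y. sm c (x * y) = sm c x * y) \<and>
     (\<forall>c x y. sm c (x * y) = x * sm c y)"

definition unital_kalg :: "('k::field \<Rightarrow> 'a::ring \<Rightarrow> 'a) \<Rightarrow> 'a \<Rightarrow> bool" where
  "unital_kalg sm e \<longleftrightarrow> kalg sm \<and> (\<forall>x. e * x = x \<and> x * e = x)"

definition fvec :: "'x list \<Rightarrow> 'x \<Rightarrow> 'k::field" where
  "fvec xs = (\<lambda>z. of_nat (count_list xs z))"

inductive_set kspan :: "('x \<Rightarrow> 'k::field) set \<Rightarrow> ('x \<Rightarrow> 'k) set" for R where
  zero: "(\<lambda>_. 0) \<in> kspan R"
| gen: "r \<in> R \<Longrightarrow> r \<in> kspan R"
| add: "f \<in> kspan R \<Longrightarrow> g \<in> kspan R \<Longrightarrow> (\<lambda>z. f z + g z) \<in> kspan R"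
| smul: "f \<in> kspan R \<Longrightarrow> (\<lambda>z. c * f z) \<in> kspan R"

definition rel2 :: "('k::field \<Rightarrow> 'v::ab_group_add \<Rightarrow> 'v) \<Rightarrow> ('k \<Rightarrow> 'w::ab_group_add \<Rightarrow> 'w)
                    \<Rightarrow> ('v \<times> 'w \<Rightarrow> 'k) set" where
  "rel2 sv sw =
     {(\<lambda>z. fvec [(v + v', w)] z - fvec [(v, w)] z - fvec [(v', w)] z) | v v' w. True} \<union>
     {(\<lambda>z. fvec [(v, w + w')] z - fvec [(v, w)] z - fvec [(v, w')] z) | v w w'. True} \<union>
     {(\<lambda>z. fvec [(sv c v, w)] z - c * fvec [(v, w)] z) | c v w. True} \<union>
     {(\<lambda>z. fvec [(v, sw c w)] z - c * fvec [(v, w)] z) | c v w. True}"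

definition teq2 :: "('k::field \<Rightarrow> 'v::ab_group_add \<Rightarrow> 'v) \<Rightarrow> ('k \<Rightarrow> 'w::ab_group_add \<Rightarrow> 'w)
                    \<Rightarrow> ('v \<times> 'w) list \<Rightarrow> ('v \<times> 'w) list \<Rightarrow> bool" where
  "teq2 sv sw xs ys \<longleftrightarrow> (\<lambda>z. fvec xs z - fvec ys z) \<in> kspan (rel2 sv sw)"

definition rel3 :: "('k::field \<Rightarrow> 'u::ab_group_add \<Rightarrow> 'u) \<Rightarrow> ('k \<Rightarrow> 'v::ab_group_add \<Rightarrow> 'v)
                    \<Rightarrow> ('k \<Rightarrow> 'w::ab_group_add \<Rightarrow> 'w) \<Rightarrow> ('u \<times> 'v \<times> 'w \<Rightarrow> 'k) set" where
  "rel3 su sv sw =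
     {(\<lambda>z. fvec [(u + u', v, w)] z - fvec [(u, v, w)] z - fvec [(u', v, w)] z) | u u' v w. True} \<union>
     {(\<lambda>z. fvec [(u, v + v', w)] z - fvec [(u, v, w)] z - fvec [(u, v', w)] z) | u v v' w. True} \<union>
     {(\<lambda>z. fvec [(u, v, w + w')] z - fvec [(u, v, w)] z - fvec [(u, v, w')] z) | u v w w'. True} \<union>
     {(\<lambda>z. fvec [(su c u, v, w)] z - c * fvec [(u, v, w)] z) | c u v w. True} \<union>
     {(\<lambda>z. fvec [(u, sv c v, w)] z - c * fvec [(u, v, w)] z) | c u v w. True} \<union>
     {(\<lambda>z. fvec [(u, v, sw c w)] z - c * fvec [(u, v, w)] z) | c u v w. True}"

definition teq3 :: "('k::field \<Rightarrow> 'u::ab_group_add \<Rightarrow> 'u) \<Rightarrow> ('k \<Rightarrow> 'v::ab_group_add \<Rightarrow> 'v)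
                    \<Rightarrow> ('k \<Rightarrow> 'w::ab_group_add \<Rightarrow> 'w)
                    \<Rightarrow> ('u \<times> 'v \<times> 'w) list \<Rightarrow> ('u \<times> 'v \<times> 'w) list \<Rightarrow> bool" where
  "teq3 su sv sw xs ys \<longleftrightarrow> (\<lambda>z. fvec xs z - fvec ys z) \<in> kspan (rel3 su sv sw)"

definition mult2 :: "('a::times \<times> 'b::times) list \<Rightarrow> ('a \<times> 'b) list \<Rightarrow> ('a \<times> 'b) list" where
  "mult2 xs ys = [(a * a', b * b'). (a, b) \<leftarrow> xs, (a', b') \<leftarrow> ys]"

definition mult3 :: "('a::times \<times> 'b::times \<times> 'c::times) list \<Rightarrow> ('a \<times> 'b \<times> 'c) list
                     \<Rightarrow> ('a \<times> 'b \<times> 'c) list" where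
  "mult3 xs ys = [(a * a', b * b', c * c'). (a, b, c) \<leftarrow> xs, (a', b', c') \<leftarrow> ys]"

definition scale2 :: "('k \<Rightarrow> 'a \<Rightarrow> 'a) \<Rightarrow> 'k \<Rightarrow> ('a \<times> 'b) list \<Rightarrow> ('a \<times> 'b) list" where
  "scale2 sm c xs = [(sm c a, b). (a, b) \<leftarrow> xs]"

definition leg12 :: "('b \<times> 'a::one) list \<Rightarrow> ('b \<times> 'a \<times> 'a) list" where
  "leg12 xs = [(b, x, 1). (b, x) \<leftarrow> xs]"

definition leg13 :: "('b \<times> 'a::one) list \<Rightarrow> ('b \<times> 'a \<times> 'a) list" where
  "leg13 xs = [(b, 1, x). (b, x) \<leftarrow> xs]"

definition id_tensor :: "('a \<Rightarrow> ('c \<times> 'd) list) \<Rightarrow> ('b \<times> 'a) list \<Rightarrow> ('b \<times> 'c \<times> 'd) list" where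
  "id_tensor D xs = concat [[(b, y, z). (y, z) \<leftarrow> D x]. (b, x) \<leftarrow> xs]"

definition tensor_id :: "('a \<Rightarrow> ('c \<times> 'd) list) \<Rightarrow> ('a \<times> 'b) list \<Rightarrow> ('c \<times> 'd \<times> 'b) list" where
  "tensor_id D xs = concat [[(y, z, b). (y, z) \<leftarrow> D x]. (x, b) \<leftarrow> xs]"

definition hopf_algebra :: "('k::field \<Rightarrow> 'a::ring_1 \<Rightarrow> 'a) \<Rightarrow> ('a \<Rightarrow> ('a \<times> 'a) list)
                            \<Rightarrow> ('a \<Rightarrow> 'a) \<Rightarrow> ('a \<Rightarrow> 'k) \<Rightarrow> bool" where
  "hopf_algebra sm D S eps \<longleftrightarrow>
     kalg sm \<and>
     \<comment> \<open>comultiplication is a unital algebra homomorphism A \<rightarrow> A \<otimes> A\<close>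
     (\<forall>x y. teq2 sm sm (D (x + y)) (D x @ D y)) \<and>
     (\<forall>c x. teq2 sm sm (D (sm c x)) (scale2 sm c (D x))) \<and>
     (\<forall>x y. teq2 sm sm (D (x * y)) (mult2 (D x) (D y))) \<and>
     teq2 sm sm (D 1) [(1, 1)] \<and>
     \<comment> \<open>coassociativity\<close>
     (\<forall>x. teq3 sm sm sm (tensor_id D (D x)) (id_tensor D (D x))) \<and>
     \<comment> \<open>counit is a unital algebra homomorphism A \<rightarrow> k\<close>
     (\<forall>x y. eps (x + y) = eps x + eps y) \<and>
     (\<forall>c x. eps (sm c x) = c * eps x) \<and>
     (\<forall>x y. eps (x * y) = eps x * eps y) \<and>
     eps 1 = 1 \<and>
     \<comment> \<open>counit axioms\<close>
     (\<forall>x. sum_list [sm (eps a) b. (a, b) \<leftarrow> D x] = x) \<and>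
     (\<forall>x. sum_list [sm (eps b) a. (a, b) \<leftarrow> D x] = x) \<and>
     \<comment> \<open>antipode: k-linear with m(S \<otimes> id)\<Delta> = \<eta>\<epsilon> = m(id \<otimes> S)\<Delta>\<close>
     (\<forall>x y. S (x + y) = S x + S y) \<and>
     (\<forall>c x. S (sm c x) = sm c (S x)) \<and>
     (\<forall>x. sum_list [S a * b. (a, b) \<leftarrow> D x] = sm (eps x) 1) \<and>
     (\<forall>x. sum_list [a * S b. (a, b) \<leftarrow> D x] = sm (eps x) 1)"

definition quantum_family_hom ::
  "('k::field \<Rightarrow> 'a1::ring_1 \<Rightarrow> 'a1) \<Rightarrow> ('a1 \<Rightarrow> ('a1 \<times> 'a1) list)
   \<Rightarrow> ('k \<Rightarrow> 'b::ring \<Rightarrow> 'b) \<Rightarrow> 'b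
   \<Rightarrow> ('k \<Rightarrow> 'a2::ring_1 \<Rightarrow> 'a2) \<Rightarrow> ('a2 \<Rightarrow> ('a2 \<times> 'a2) list)
   \<Rightarrow> ('a1 \<Rightarrow> ('b \<times> 'a2) list) \<Rightarrow> bool" where
  "quantum_family_hom sm1 D1 smB oneB sm2 D2 \<alpha> \<longleftrightarrow>
     \<comment> \<open>unital algebra homomorphism A1 \<rightarrow> B \<otimes> A2\<close>
     (\<forall>x y. teq2 smB sm2 (\<alpha> (x + y)) (\<alpha> x @ \<alpha> y)) \<and>
     (\<forall>c x. teq2 smB sm2 (\<alpha> (sm1 c x)) (scale2 smB c (\<alpha> x))) \<and>
     (\<forall>x y. teq2 smB sm2 (\<alpha> (x * y)) (mult2 (\<alpha> x) (\<alpha> y))) \<and>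
     teq2 smB sm2 (\<alpha> 1) [(oneB, 1)] \<and>
     \<comment> \<open>\<alpha>(a_(1))_12 \<alpha>(a_(2))_13 = (id \<otimes> \<Delta>2)(\<alpha>(a))\<close>
     (\<forall>a. teq3 smB sm2 sm2
            (concat [mult3 (leg12 (\<alpha> a1)) (leg13 (\<alpha> a2)). (a1, a2) \<leftarrow> D1 a])
            (id_tensor D2 (\<alpha> a)))"

end

theory Submission
  imports Defs "HOL-Library.Multiset"
begin



definition tq :: "('y \<Rightarrow> 'k::field) set \<Rightarrow> 'y list \<Rightarrow> 'y list \<Rightarrow> bool" where
  "tq R A B \<longleftrightarrow> (\<lambda>z. fvec A z - fvec B z) \<in> kspan R"

definition hom :: "('y \<Rightarrow> 'k::field) set \<Rightarrow> 'k \<Rightarrow> 'y list \<Rightarrow> 'y list \<Rightarrow> bool" where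
  "hom R c A B \<longleftrightarrow> (\<lambda>z. fvec A z - c * fvec B z) \<in> kspan R"

definition Lin :: "('x \<Rightarrow> 'y list) \<Rightarrow> ('x \<Rightarrow> 'k) \<Rightarrow> 'y \<Rightarrow> 'k::field" where
  "Lin g f = (\<lambda>w. \<Sum>z\<in>{z. f z \<noteq> 0}. f z * fvec (g z) w)"

lemma fvec_Nil[simp]: "fvec [] z = 0"
  by (simp add: fvec_def)

lemma fvec_append[simp]: "fvec (xs @ ys) z = fvec xs z + fvec ys z"
  by (simp add: fvec_def)

lemma fvec_Cons: "fvec (x # xs) z = fvec [x] z + fvec xs z"
  by (simp add: fvec_def)

lemma fvec_single: "fvec [x] z = (if x = z then 1 else 0)"
  by (simp add: fvec_def)

lemma fvec_mset: "mset A = mset B \<Longrightarrow> fvec A = fvec B"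
  unfolding fvec_def by (rule ext) (metis count_mset)

lemma fvec_supp: "{z. fvec xs z \<noteq> (0::'k::field)} \<subseteq> set xs"
  using count_notin by (fastforce simp: fvec_def)

lemma fvec_fin: "finite {z. fvec xs z \<noteq> (0::'k::field)}"
  by (rule finite_subset[OF fvec_supp]) simp

lemma Lin_eq:
  assumes "finite U" "{z. f z \<noteq> 0} \<subseteq> U"
  shows "Lin g f w = (\<Sum>z\<in>U. f z * fvec (g z) w)"
  unfolding Lin_def
  by (rule sum.mono_neutral_left) (use assms in auto)

lemma Lin_add:
  assumes "finite {z. f z \<noteq> 0}" "finite {z. h z \<noteq> 0}"
  shows "Lin g (\<lambda>z. f z + h z) = (\<lambda>w. Lin g f w + Lin g h w)"
proof
  fix w
  let ?U = "{z. f z \<noteq> 0} \<union> {z. h z \<noteq> 0}"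
  have "Lin g (\<lambda>z. f z + h z) w = (\<Sum>z\<in>?U. (f z + h z) * fvec (g z) w)"
    by (rule Lin_eq) (use assms in auto)
  also have "\<dots> = (\<Sum>z\<in>?U. f z * fvec (g z) w) + (\<Sum>z\<in>?U. h z * fvec (g z) w)"
    by (simp add: distrib_right sum.distrib)
  also have "\<dots> = Lin g f w + Lin g h w"
    by (subst (1 2) Lin_eq[of ?U]) (use assms in auto)
  finally show "Lin g (\<lambda>z. f z + h z) w = Lin g f w + Lin g h w" .
qed

lemma Lin_smul:
  assumes "finite {z. f z \<noteq> 0}"
  shows "Lin g (\<lambda>z. c * f z) = (\<lambda>w. c * Lin g f w)"
proof
  fix w
  let ?U = "{z. f z \<noteq> 0}"
  have "Lin g (\<lambda>z. c * f z) w = (\<Sum>z\<in>?U. (c * f z) * fvec (g z) w)"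
    by (rule Lin_eq) (use assms in auto)
  also have "\<dots> = c * Lin g f w"
    by (subst Lin_eq[of ?U]) (use assms in \<open>auto simp: sum_distrib_left mult.assoc\<close>)
  finally show "Lin g (\<lambda>z. c * f z) w = c * Lin g f w" .
qed

lemma Lin_zero: "Lin g (\<lambda>_. 0) = (\<lambda>w. 0)"
  by (simp add: Lin_def)

lemma fin_add: "finite {z. f z \<noteq> 0} \<Longrightarrow> finite {z. h z \<noteq> (0::'k::field)} \<Longrightarrow> finite {z. f z + h z \<noteq> 0}"
  by (rule finite_subset[of _ "{z. f z \<noteq> 0} \<union> {z. h z \<noteq> 0}"]) auto

lemma fin_smul: "finite {z. f z \<noteq> 0} \<Longrightarrow> finite {z. c * f z \<noteq> (0::'k::field)}"
  by (rule finite_subset[of _ "{z. f z \<noteq> 0}"]) auto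

lemma Lin_diff:
  assumes "finite {z. f z \<noteq> 0}" "finite {z. h z \<noteq> 0}"
  shows "Lin g (\<lambda>z. f z - h z) = (\<lambda>w. Lin g f w - Lin g h w)"
proof
  fix w
  let ?U = "{z. f z \<noteq> 0} \<union> {z. h z \<noteq> 0}"
  have "Lin g (\<lambda>z. f z - h z) w = (\<Sum>z\<in>?U. (f z - h z) * fvec (g z) w)"
    by (rule Lin_eq) (use assms in auto)
  also have "\<dots> = (\<Sum>z\<in>?U. f z * fvec (g z) w) - (\<Sum>z\<in>?U. h z * fvec (g z) w)"
    by (simp add: left_diff_distrib sum_subtractf)
  also have "\<dots> = Lin g f w - Lin g h w"
    by (subst (1 2) Lin_eq[of ?U]) (use assms in auto)
  finally show "Lin g (\<lambda>z. f z - h z) w = Lin g f w - Lin g h w" .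
qed

lemma Lin_fvec: "Lin g (fvec xs) = fvec (concat (map g xs))"
proof (induction xs)
  case Nil
  then show ?case using Lin_zero[of g] by (simp add: fvec_def[symmetric] fun_eq_iff)
next
  case (Cons x xs)
  have s: "Lin g (fvec [x]) = fvec (g x)"
  proof
    fix w show "Lin g (fvec [x]) w = fvec (g x) w"
      by (subst Lin_eq[of "{x}"]) (auto simp: fvec_single)
  qed
  have e: "fvec (x # xs) = (\<lambda>z. fvec [x] z + fvec xs z)"
    by (rule ext, rule fvec_Cons)
  show ?case unfolding e Lin_add[OF fvec_fin fvec_fin, of g "[x]" xs] s Cons.IH
    by (simp add: fun_eq_iff)
qed

lemma kspan_fin:
  assumes "\<forall>r\<in>R. finite {z. r z \<noteq> 0}" "f \<in> kspan R"
  shows "finite {z. f z \<noteq> 0}"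
  using assms(2) by induction (use assms(1) fin_add fin_smul in auto)

lemma push_kspan:
  assumes "\<forall>r\<in>R. finite {z. r z \<noteq> 0}" "\<forall>r\<in>R. Lin g r \<in> kspan R'" "f \<in> kspan R"
  shows "Lin g f \<in> kspan R'"
  using assms(3)
proof induction
  case zero then show ?case by (simp add: Lin_zero kspan.zero)
next
  case (gen r) then show ?case using assms(2) by auto
next
  case (add f h)
  then show ?case using kspan_fin[OF assms(1)]
    by (simp add: Lin_add kspan.add)
next
  case (smul f c)
  then show ?case using kspan_fin[OF assms(1)]
    by (simp add: Lin_smul kspan.smul)
qed

lemma fin_diff: "finite {z. f z \<noteq> 0} \<Longrightarrow> finite {z. h z \<noteq> (0::'k::field)} \<Longrightarrow> finite {z. f z - h z \<noteq> 0}"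
  by (rule finite_subset[of _ "{z. f z \<noteq> 0} \<union> {z. h z \<noteq> 0}"]) auto

lemma Lin_gen3: "Lin g (\<lambda>z. fvec A z - fvec B z - fvec C z)
   = (\<lambda>w. fvec (concat (map g A)) w - fvec (concat (map g B)) w - fvec (concat (map g C)) w)"
  by (simp only: Lin_diff fin_diff fvec_fin Lin_fvec)

lemma Lin_gens: "Lin g (\<lambda>z. fvec A z - c * fvec B z)
   = (\<lambda>w. fvec (concat (map g A)) w - c * fvec (concat (map g B)) w)"
  by (simp only: Lin_diff fin_smul fvec_fin Lin_fvec Lin_smul)


lemma tq_refl[simp]: "tq R A A"
  by (simp add: tq_def kspan.zero)

lemma tq_sym: "tq R A B \<Longrightarrow> tq R B A"
  unfolding tq_def
  by (drule kspan.smul[where c="-1"]) (simp add: algebra_simps)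

lemma tq_trans[trans]: "tq R A B \<Longrightarrow> tq R B C \<Longrightarrow> tq R A C"
  unfolding tq_def
  by (drule (1) kspan.add) simp

lemma tq_append: "tq R A B \<Longrightarrow> tq R C D \<Longrightarrow> tq R (A @ C) (B @ D)"
  unfolding tq_def
  by (drule (1) kspan.add) (simp add: algebra_simps)

lemma tq_mset: fixes R :: "('y \<Rightarrow> 'k::field) set" assumes "mset A = mset B" shows "tq R A B"
proof -
  have e: "fvec A = (fvec B :: 'y \<Rightarrow> 'k)" by (rule fvec_mset[OF assms])
  have "(\<lambda>z. fvec A z - fvec B z) = (\<lambda>_. 0 :: 'k)" by (simp add: e)
  then show ?thesis by (simp add: tq_def kspan.zero)
qed

lemma tq_eq: "A = B \<Longrightarrow> tq R A B"
  by simp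

lemma tq_concat_map:
  "(\<And>x. x \<in> set L \<Longrightarrow> tq R (f x) (g x)) \<Longrightarrow> tq R (concat (map f L)) (concat (map g L))"
  by (induction L) (auto intro: tq_append)

lemma tq_gen: "(\<lambda>z. fvec [P] z - fvec [Q] z - fvec [S] z) \<in> R \<Longrightarrow> tq R [P] [Q, S]"
  unfolding tq_def
  by (drule kspan.gen) (simp add: fvec_Cons[of Q "[S]"] diff_diff_eq)

lemma hom_gen: "(\<lambda>z. fvec [P] z - c * fvec [Q] z) \<in> R \<Longrightarrow> hom R c [P] [Q]"
  unfolding hom_def by (rule kspan.gen)

lemma hom_append: "hom R c A B \<Longrightarrow> hom R c C D \<Longrightarrow> hom R c (A @ C) (B @ D)"
  unfolding hom_def
  by (drule (1) kspan.add) (simp add: algebra_simps)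

lemma hom_Nil[simp]: "hom R c [] []"
  by (simp add: hom_def kspan.zero)

lemma hom_tq_left: "tq R A A' \<Longrightarrow> hom R c A' B \<Longrightarrow> hom R c A B"
  unfolding hom_def tq_def
  by (drule (1) kspan.add) (simp add: algebra_simps)

lemma hom_tq_right: "tq R B' B \<Longrightarrow> hom R c A B' \<Longrightarrow> hom R c A B"
  unfolding hom_def tq_def
  by (drule kspan.smul[where c=c], drule (1) kspan.add) (simp add: algebra_simps)

lemma hom_tq: "hom R c X A \<Longrightarrow> hom R c Y A \<Longrightarrow> tq R X Y"
  unfolding hom_def tq_def
  by (drule kspan.smul[where c="-1"] , drule (1) kspan.add) (simp add: algebra_simps)

lemma tq_map_add:
  "(\<And>p. p \<in> set L \<Longrightarrow> tq R [f p] [g p, h p]) \<Longrightarrow> tq R (map f L) (map g L @ map h L)"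
proof (induction L)
  case Nil then show ?case by simp
next
  case (Cons p L)
  have "tq R ([f p] @ map f L) ([g p, h p] @ (map g L @ map h L))"
    using Cons by (intro tq_append) auto
  also have "tq R \<dots> (map g (p # L) @ map h (p # L))"
    by (rule tq_mset) simp
  finally show ?case by simp
qed

lemma hom_map:
  "(\<And>p. p \<in> set L \<Longrightarrow> hom R c [f p] [g p]) \<Longrightarrow> hom R c (map f L) (map g L)"
proof (induction L)
  case Nil then show ?case by simp
next
  case (Cons p L)
  have "hom R c ([f p] @ map f L) ([g p] @ map g L)"
    using Cons by (intro hom_append) auto
  then show ?case by simp
qed

lemma Lin_cond_add:
  assumes "tq R (g p) (g q @ g s)"
  shows "Lin g (\<lambda>z. fvec [p] z - fvec [q] z - fvec [s] z) \<in> kspan R"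
  using assms unfolding tq_def Lin_gen3 by (simp add: diff_diff_eq)

lemma Lin_cond_hom:
  assumes "hom R c (g p) (g q)"
  shows "Lin g (\<lambda>z. fvec [p] z - c * fvec [q] z) \<in> kspan R"
  using assms unfolding hom_def Lin_gens by simp

lemma push_tq:
  assumes "\<forall>r\<in>R. finite {z. r z \<noteq> 0}" "\<forall>r\<in>R. Lin g r \<in> kspan R'" "tq R xs ys"
  shows "tq R' (concat (map g xs)) (concat (map g ys))"
  using push_kspan[OF assms(1,2) assms(3)[unfolded tq_def]]
  by (simp add: tq_def Lin_diff fvec_fin Lin_fvec)

lemma push2:
  assumes "teq2 su sv xs ys"
  and a1: "\<And>u u' v. tq R (g (u + u', v)) (g (u, v) @ g (u', v))"
  and a2: "\<And>u v v'. tq R (g (u, v + v')) (g (u, v) @ g (u, v'))"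
  and h1: "\<And>c u v. hom R c (g (su c u, v)) (g (u, v))"
  and h2: "\<And>c u v. hom R c (g (u, sv c v)) (g (u, v))"
  shows "tq R (concat (map g xs)) (concat (map g ys))"
proof (rule push_tq)
  show "tq (rel2 su sv) xs ys" using assms(1) by (simp add: teq2_def tq_def)
  show "\<forall>r\<in>rel2 su sv. finite {z. r z \<noteq> 0}"
    by (auto simp: rel2_def intro!: fin_diff fin_smul fvec_fin)
  show "\<forall>r\<in>rel2 su sv. Lin g r \<in> kspan R"
    unfolding rel2_def
    by (auto intro!: Lin_cond_add Lin_cond_hom a1 a2 h1 h2)
qed

lemma push3:
  assumes "teq3 su sv sw xs ys"
  and a1: "\<And>u u' v w. tq R (g (u + u', v, w)) (g (u, v, w) @ g (u', v, w))"
  and a2: "\<And>u v v' w. tq R (g (u, v + v', w)) (g (u, v, w) @ g (u, v', w))"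
  and a3: "\<And>u v w w'. tq R (g (u, v, w + w')) (g (u, v, w) @ g (u, v, w'))"
  and h1: "\<And>c u v w. hom R c (g (su c u, v, w)) (g (u, v, w))"
  and h2: "\<And>c u v w. hom R c (g (u, sv c v, w)) (g (u, v, w))"
  and h3: "\<And>c u v w. hom R c (g (u, v, sw c w)) (g (u, v, w))"
  shows "tq R (concat (map g xs)) (concat (map g ys))"
proof (rule push_tq)
  show "tq (rel3 su sv sw) xs ys" using assms(1) by (simp add: teq3_def tq_def)
  show "\<forall>r\<in>rel3 su sv sw. finite {z. r z \<noteq> 0}"
    by (auto simp: rel3_def intro!: fin_diff fin_smul fvec_fin)
  show "\<forall>r\<in>rel3 su sv sw. Lin g r \<in> kspan R"
    unfolding rel3_def
    by (auto intro!: Lin_cond_add Lin_cond_hom a1 a2 a3 h1 h2 h3)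
qed




locale QF =
  fixes sm1 :: "'k::field \<Rightarrow> 'a1::ring_1 \<Rightarrow> 'a1"
    and D1 :: "'a1 \<Rightarrow> ('a1 \<times> 'a1) list" and S1 :: "'a1 \<Rightarrow> 'a1" and eps1 :: "'a1 \<Rightarrow> 'k"
    and sm2 :: "'k \<Rightarrow> 'a2::ring_1 \<Rightarrow> 'a2"
    and D2 :: "'a2 \<Rightarrow> ('a2 \<times> 'a2) list" and S2 :: "'a2 \<Rightarrow> 'a2" and eps2 :: "'a2 \<Rightarrow> 'k"
    and smB :: "'k \<Rightarrow> 'b::ring \<Rightarrow> 'b" and oneB :: 'b
    and \<alpha> :: "'a1 \<Rightarrow> ('b \<times> 'a2) list"
  assumes H1: "hopf_algebra sm1 D1 S1 eps1"
    and H2: "hopf_algebra sm2 D2 S2 eps2"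
    and HB: "unital_kalg smB oneB"
    and HQ: "quantum_family_hom sm1 D1 smB oneB sm2 D2 \<alpha>"
begin

abbreviation "R3 \<equiv> rel3 smB sm2 sm2"
abbreviation eq3 (infix "\<approx>" 50) where "A \<approx> B \<equiv> tq R3 A B"

lemma kB: "kalg smB" using HB by (simp add: unital_kalg_def)
lemma k1: "kalg sm1" using H1 by (simp add: hopf_algebra_def)
lemma k2: "kalg sm2" using H2 by (simp add: hopf_algebra_def)

lemma smB_ml: "smB c (x * y) = smB c x * y" using kB unfolding kalg_def by metis
lemma smB_mr: "smB c (x * y) = x * smB c y" using kB unfolding kalg_def by metis
lemma sm2_ml: "sm2 c (x * y) = sm2 c x * y" using k2 unfolding kalg_def by metis
lemma sm2_mr: "sm2 c (x * y) = x * sm2 c y" using k2 unfolding kalg_def by metis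
lemma oneB_l[simp]: "oneB * x = x" using HB by (simp add: unital_kalg_def)
lemma oneB_r[simp]: "x * oneB = x" using HB by (simp add: unital_kalg_def)

lemma sm1_zero: "sm1 0 x = 0"
proof -
  have "sm1 (0 + 0) x = sm1 0 x + sm1 0 x" using k1 unfolding kalg_def by metis
  then have "sm1 0 x + sm1 0 x = sm1 0 x" by simp
  then show ?thesis by (metis add_cancel_right_right)
qed

lemma S1_add: "S1 (x + y) = S1 x + S1 y" using H1 by (simp add: hopf_algebra_def)
lemma S1_sm: "S1 (sm1 c x) = sm1 c (S1 x)" using H1 by (simp add: hopf_algebra_def)
lemma D1_mult: "teq2 sm1 sm1 (D1 (x * y)) (mult2 (D1 x) (D1 y))" using H1 by (simp add: hopf_algebra_def)
lemma coassoc1: "teq3 sm1 sm1 sm1 (tensor_id D1 (D1 x)) (id_tensor D1 (D1 x))" using H1 by (simp add: hopf_algebra_def)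
lemma counit_l: "sum_list [sm1 (eps1 a) b. (a, b) \<leftarrow> D1 x] = x" using H1 by (simp add: hopf_algebra_def)
lemma counit_r: "sum_list [sm1 (eps1 b) a. (a, b) \<leftarrow> D1 x] = x" using H1 by (simp add: hopf_algebra_def)
lemma anti_l: "sum_list [S1 a * b. (a, b) \<leftarrow> D1 x] = sm1 (eps1 x) 1" using H1 by (simp add: hopf_algebra_def)
lemma anti_r: "sum_list [a * S1 b. (a, b) \<leftarrow> D1 x] = sm1 (eps1 x) 1" using H1 by (simp add: hopf_algebra_def)
lemma D2_add: "teq2 sm2 sm2 (D2 (x + y)) (D2 x @ D2 y)" using H2 by (simp add: hopf_algebra_def)
lemma D2_sm: "teq2 sm2 sm2 (D2 (sm2 c x)) (scale2 sm2 c (D2 x))" using H2 by (simp add: hopf_algebra_def)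
lemma D2_mult: "teq2 sm2 sm2 (D2 (x * y)) (mult2 (D2 x) (D2 y))" using H2 by (simp add: hopf_algebra_def)
lemma al_add: "teq2 smB sm2 (\<alpha> (x + y)) (\<alpha> x @ \<alpha> y)" using HQ by (simp add: quantum_family_hom_def)
lemma al_sm: "teq2 smB sm2 (\<alpha> (sm1 c x)) (scale2 smB c (\<alpha> x))" using HQ by (simp add: quantum_family_hom_def)
lemma al_mult: "teq2 smB sm2 (\<alpha> (x * y)) (mult2 (\<alpha> x) (\<alpha> y))" using HQ by (simp add: quantum_family_hom_def)
lemma al_one: "teq2 smB sm2 (\<alpha> 1) [(oneB, 1)]" using HQ by (simp add: quantum_family_hom_def)
lemma al_hyp: "teq3 smB sm2 sm2 (concat [mult3 (leg12 (\<alpha> a1)) (leg13 (\<alpha> a2)). (a1, a2) \<leftarrow> D1 a])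
            (id_tensor D2 (\<alpha> a))" using HQ by (simp add: quantum_family_hom_def)

lemma teq3_tq: "teq3 su sv sw = tq (rel3 su sv sw)"
  by (simp add: fun_eq_iff teq3_def tq_def)
lemma teq2_tq: "teq2 su sv = tq (rel2 su sv)"
  by (simp add: fun_eq_iff teq2_def tq_def)

lemma g3_1: "[(u + u', v, w)] \<approx> [(u, v, w), (u', v, w)]"
  by (rule tq_gen) (unfold rel3_def, rule UnI1, rule UnI1, rule UnI1, rule UnI1, rule UnI1, blast)
lemma g3_2: "[(u, v + v', w)] \<approx> [(u, v, w), (u, v', w)]"
  by (rule tq_gen) (unfold rel3_def, rule UnI1, rule UnI1, rule UnI1, rule UnI1, rule UnI2, blast)
lemma g3_3: "[(u, v, w + w')] \<approx> [(u, v, w), (u, v, w')]"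
  by (rule tq_gen) (unfold rel3_def, rule UnI1, rule UnI1, rule UnI1, rule UnI2, blast)
lemma h3_1: "hom R3 c [(smB c u, v, w)] [(u, v, w)]"
  by (rule hom_gen) (unfold rel3_def, rule UnI1, rule UnI1, rule UnI2, blast)
lemma h3_2: "hom R3 c [(u, sm2 c v, w)] [(u, v, w)]"
  by (rule hom_gen) (unfold rel3_def, rule UnI1, rule UnI2, blast)
lemma h3_3: "hom R3 c [(u, v, sm2 c w)] [(u, v, w)]"
  by (rule hom_gen) (unfold rel3_def, rule UnI2, blast)

lemma mult3_single: "mult3 [(a, b, c)] zs = map (\<lambda>(a', b', c'). (a * a', b * b', c * c')) zs"
  by (induction zs) (auto simp: mult3_def)

lemma mult3_Nil[simp]: "mult3 [] zs = []" by (simp add: mult3_def)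
lemma mult3_Nil2[simp]: "mult3 xs [] = []" by (induction xs) (auto simp: mult3_def)
lemma mult3_Cons: "mult3 (p # xs) zs = mult3 [p] zs @ mult3 xs zs"
  by (cases p) (simp add: mult3_def)
lemma mult3_append: "mult3 (xs @ ys) zs = mult3 xs zs @ mult3 ys zs"
  by (induction xs) (simp, metis append_assoc append_Cons mult3_Cons)

lemma mult3_Cons2: "mset (mult3 xs (q # zs)) = mset (mult3 xs [q] @ mult3 xs zs)"
  by (induction xs) (auto simp: mult3_def)

end


context QF begin

lemma mult3_append2: "mset (mult3 xs (ys @ zs)) = mset (mult3 xs ys @ mult3 xs zs)"
  by (induction xs) (auto simp: mult3_def)

lemma mult3_concat: "mult3 (concat (map f L)) Z = concat (map (\<lambda>x. mult3 (f x) Z) L)"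
  by (induction L) (auto simp: mult3_append)

lemma mult3_concat2: "mset (mult3 Z (concat (map f L))) = mset (concat (map (\<lambda>x. mult3 Z (f x)) L))"
  by (induction L) (auto simp: mult3_append2)

lemma mult3_singles: "mult3 A Z = concat (map (\<lambda>p. mult3 [p] Z) A)"
  by (induction A) (simp, metis concat.simps(2) list.simps(9) mult3_Cons)

lemma mult3_singles2: "mset (mult3 Z A) = mset (concat (map (\<lambda>p. mult3 Z [p]) A))"
proof (induction A)
  case Nil then show ?case by simp
next
  case (Cons p A)
  have "mset (mult3 Z (p # A)) = mset (mult3 Z [p] @ mult3 Z A)" by (rule mult3_Cons2)
  then show ?case using Cons by simp
qed

lemma mult3_single_single: "mult3 (mult3 [p] [q]) (C :: ('b \<times> 'a2 \<times> 'a2) list) = mult3 [p] (mult3 [q] C)"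
  by (cases p, cases q) (simp add: mult3_single map_map comp_def split_beta mult.assoc)

lemma mult3_single_append: "mult3 [p] (U @ V) = mult3 [p] U @ mult3 [p] V"
  by (cases p) (simp add: mult3_single)

lemma mult3_single_assoc: "mult3 (mult3 [p] B) (C :: ('b \<times> 'a2 \<times> 'a2) list) = mult3 [p] (mult3 B C)"
proof (induction B)
  case Nil then show ?case by simp
next
  case (Cons q B)
  have e1: "mult3 [p] (q # B) = mult3 [p] [q] @ mult3 [p] B"
    by (cases p) (simp add: mult3_single)
  have e2: "mult3 (q # B) C = mult3 [q] C @ mult3 B C" by (rule mult3_Cons)
  show ?case
    by (simp only: e1 e2 mult3_append mult3_single_append mult3_single_single Cons)
qed

lemma mult3_assoc: "mult3 (mult3 A B) (C :: ('b \<times> 'a2 \<times> 'a2) list) = mult3 A (mult3 B C)"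
proof (induction A)
  case Nil then show ?case by simp
next
  case (Cons p A)
  have e1: "mult3 (p # A) B = mult3 [p] B @ mult3 A B" by (rule mult3_Cons)
  have e2: "mult3 (p # A) (mult3 B C) = mult3 [p] (mult3 B C) @ mult3 A (mult3 B C)" by (rule mult3_Cons)
  show ?case
    by (simp only: e1 e2 mult3_append mult3_single_assoc Cons)
qed

end


context QF begin

lemma mult3_cong_l:
  assumes "A \<approx> A'" shows "mult3 A Z \<approx> mult3 A' Z"
proof -
  have "concat (map (\<lambda>p. mult3 [p] Z) A) \<approx> concat (map (\<lambda>p. mult3 [p] Z) A')"
  proof (rule push3[OF assms[folded teq3_tq]])
    fix u u' v w
    show "mult3 [(u + u', v, w)] Z \<approx> mult3 [(u, v, w)] Z @ mult3 [(u', v, w)] Z"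
      unfolding mult3_single by (rule tq_map_add) (auto simp: split_beta distrib_right g3_1)
  next
    fix u v v' w
    show "mult3 [(u, v + v', w)] Z \<approx> mult3 [(u, v, w)] Z @ mult3 [(u, v', w)] Z"
      unfolding mult3_single by (rule tq_map_add) (auto simp: split_beta distrib_right g3_2)
  next
    fix u v w w'
    show "mult3 [(u, v, w + w')] Z \<approx> mult3 [(u, v, w)] Z @ mult3 [(u, v, w')] Z"
      unfolding mult3_single by (rule tq_map_add) (auto simp: split_beta distrib_right g3_3)
  next
    fix c u v w
    show "hom R3 c (mult3 [(smB c u, v, w)] Z) (mult3 [(u, v, w)] Z)"
      unfolding mult3_single by (rule hom_map) (auto simp: split_beta smB_ml[symmetric] h3_1)
  next
    fix c u v w
    show "hom R3 c (mult3 [(u, sm2 c v, w)] Z) (mult3 [(u, v, w)] Z)"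
      unfolding mult3_single by (rule hom_map) (auto simp: split_beta sm2_ml[symmetric] h3_2)
  next
    fix c u v w
    show "hom R3 c (mult3 [(u, v, sm2 c w)] Z) (mult3 [(u, v, w)] Z)"
      unfolding mult3_single by (rule hom_map) (auto simp: split_beta sm2_ml[symmetric] h3_3)
  qed
  then show ?thesis by (simp flip: mult3_singles)
qed

lemma mult3_single2: "mult3 Z [(a, b, c)] = map (\<lambda>(a', b', c'). (a' * a, b' * b, c' * c)) Z"
  by (induction Z) (auto simp: mult3_def)

lemma mult3_cong_r:
  assumes "A \<approx> A'" shows "mult3 Z A \<approx> mult3 Z A'"
proof -
  have "concat (map (\<lambda>p. mult3 Z [p]) A) \<approx> concat (map (\<lambda>p. mult3 Z [p]) A')"
  proof (rule push3[OF assms[folded teq3_tq]])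
    fix u u' v w
    show "mult3 Z [(u + u', v, w)] \<approx> mult3 Z [(u, v, w)] @ mult3 Z [(u', v, w)]"
      unfolding mult3_single2 by (rule tq_map_add) (auto simp: split_beta distrib_left g3_1)
  next
    fix u v v' w
    show "mult3 Z [(u, v + v', w)] \<approx> mult3 Z [(u, v, w)] @ mult3 Z [(u, v', w)]"
      unfolding mult3_single2 by (rule tq_map_add) (auto simp: split_beta distrib_left g3_2)
  next
    fix u v w w'
    show "mult3 Z [(u, v, w + w')] \<approx> mult3 Z [(u, v, w)] @ mult3 Z [(u, v, w')]"
      unfolding mult3_single2 by (rule tq_map_add) (auto simp: split_beta distrib_left g3_3)
  next
    fix c u v w
    show "hom R3 c (mult3 Z [(smB c u, v, w)]) (mult3 Z [(u, v, w)])"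
      unfolding mult3_single2 by (rule hom_map) (auto simp: split_beta smB_mr[symmetric] h3_1)
  next
    fix c u v w
    show "hom R3 c (mult3 Z [(u, sm2 c v, w)]) (mult3 Z [(u, v, w)])"
      unfolding mult3_single2 by (rule hom_map) (auto simp: split_beta sm2_mr[symmetric] h3_2)
  next
    fix c u v w
    show "hom R3 c (mult3 Z [(u, v, sm2 c w)]) (mult3 Z [(u, v, w)])"
      unfolding mult3_single2 by (rule hom_map) (auto simp: split_beta sm2_mr[symmetric] h3_3)
  qed
  then show ?thesis
    by (rule tq_trans[OF tq_trans[OF tq_mset[OF mult3_singles2]] tq_sym[OF tq_mset[OF mult3_singles2]]])
qed

lemma mult3_cong: "A \<approx> A' \<Longrightarrow> B \<approx> B' \<Longrightarrow> mult3 A B \<approx> mult3 A' B'"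
  by (rule tq_trans[OF mult3_cong_l mult3_cong_r])

definition sc3 :: "'k \<Rightarrow> ('b \<times> 'a2 \<times> 'a2) list \<Rightarrow> ('b \<times> 'a2 \<times> 'a2) list" where
  "sc3 c xs = map (\<lambda>(b, x, y). (smB c b, x, y)) xs"

lemma sc3_hom: "hom R3 c (sc3 c A) A"
proof -
  have "hom R3 c (map (\<lambda>(b, x, y). (smB c b, x, y)) A) (map id A)"
    by (rule hom_map) (auto simp: split_beta h3_1[of c "fst p" "fst (snd p)" "snd (snd p)" for p, simplified])
  then show ?thesis by (simp add: sc3_def)
qed

lemma sc3_cong: "A \<approx> B \<Longrightarrow> sc3 c A \<approx> sc3 c B"
  by (rule hom_tq[OF sc3_hom hom_tq_right[OF tq_sym sc3_hom]])

lemma sc3_append: "sc3 c (A @ B) = sc3 c A @ sc3 c B" by (simp add: sc3_def)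
lemma sc3_concat: "sc3 c (concat (map f L)) = concat (map (\<lambda>x. sc3 c (f x)) L)"
  by (simp add: sc3_def map_concat comp_def)

lemma mult3_sc3_l: "mult3 (sc3 c A) B = sc3 c (mult3 A B)"
  by (induction A) (auto simp: mult3_def sc3_def smB_ml map_concat split_beta comp_def)
lemma mult3_sc3_r: "mult3 A (sc3 c B) = sc3 c (mult3 A B)"
  by (induction A) (auto simp: mult3_def sc3_def smB_mr map_concat split_beta comp_def)

lemma sc3_zero: "sc3 0 A \<approx> []"
  using sc3_hom[of 0 A] by (simp add: hom_def tq_def)

lemma mult3_unit_l: "mult3 [(oneB, 1, 1)] (A :: ('b \<times> 'a2 \<times> 'a2) list) = A"
  by (simp add: mult3_single split_beta)
lemma mult3_unit_r: "mult3 (A :: ('b \<times> 'a2 \<times> 'a2) list) [(oneB, 1, 1)] = A"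
  by (simp add: mult3_single2 split_beta)

end


context QF begin

definition lin1 :: "('a1 \<Rightarrow> ('b \<times> 'a2 \<times> 'a2) list) \<Rightarrow> bool" where
  "lin1 Y \<longleftrightarrow> (\<forall>x y. Y (x + y) \<approx> Y x @ Y y) \<and> (\<forall>c x. Y (sm1 c x) \<approx> sc3 c (Y x))"

lemma lin1I: "(\<And>x y. Y (x + y) \<approx> Y x @ Y y) \<Longrightarrow> (\<And>c x. Y (sm1 c x) \<approx> sc3 c (Y x)) \<Longrightarrow> lin1 Y"
  by (simp add: lin1_def)
lemma lin1_add: "lin1 Y \<Longrightarrow> Y (x + y) \<approx> Y x @ Y y" by (simp add: lin1_def)
lemma lin1_sm: "lin1 Y \<Longrightarrow> Y (sm1 c x) \<approx> sc3 c (Y x)" by (simp add: lin1_def)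

lemma lin_mult_r: "lin1 Y \<Longrightarrow> lin1 (\<lambda>x. mult3 (Y x) W)"
  by (rule lin1I) (auto simp: mult3_append mult3_sc3_l dest: lin1_add lin1_sm intro: mult3_cong_l
      [THEN tq_trans] )

lemma lin_mult_l: "lin1 Y \<Longrightarrow> lin1 (\<lambda>x. mult3 W (Y x))"
proof (rule lin1I)
  fix x y assume "lin1 Y"
  then have "mult3 W (Y (x + y)) \<approx> mult3 W (Y x @ Y y)" by (intro mult3_cong_r lin1_add)
  also have "\<dots> \<approx> mult3 W (Y x) @ mult3 W (Y y)" by (rule tq_mset[OF mult3_append2])
  finally show "mult3 W (Y (x + y)) \<approx> mult3 W (Y x) @ mult3 W (Y y)" .
next
  fix c x assume "lin1 Y"
  then show "mult3 W (Y (sm1 c x)) \<approx> sc3 c (mult3 W (Y x))"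
    by (metis lin1_sm mult3_cong_r mult3_sc3_r)
qed

lemma lin_zero: assumes "lin1 Y" shows "Y 0 \<approx> []"
proof -
  have "Y 0 = Y (sm1 0 0)" by (simp add: sm1_zero)
  also have "\<dots> \<approx> sc3 0 (Y 0)" by (rule lin1_sm[OF assms])
  also have "\<dots> \<approx> []" by (rule sc3_zero)
  finally show ?thesis .
qed

lemma lin_sum: assumes "lin1 Y" shows "Y (sum_list xs) \<approx> concat (map Y xs)"
proof (induction xs)
  case Nil then show ?case using lin_zero[OF assms] by simp
next
  case (Cons x xs)
  have "Y (sum_list (x # xs)) \<approx> Y x @ Y (sum_list xs)" using lin1_add[OF assms] by simp
  also have "\<dots> \<approx> Y x @ concat (map Y xs)" by (rule tq_append[OF tq_refl Cons])
  finally show ?case by simp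
qed

lemma push2_lin:
  assumes "teq2 sm1 sm1 L L'" "\<And>v. lin1 (\<lambda>u. g (u, v))" "\<And>u. lin1 (\<lambda>v. g (u, v))"
  shows "concat (map g L) \<approx> concat (map g L')"
proof (rule push2[OF assms(1)])
  fix u u' v show "g (u + u', v) \<approx> g (u, v) @ g (u', v)" using lin1_add[OF assms(2)] by blast
next
  fix u v v' show "g (u, v + v') \<approx> g (u, v) @ g (u, v')" using lin1_add[OF assms(3)] by blast
next
  fix c u v show "hom R3 c (g (sm1 c u, v)) (g (u, v))"
    using lin1_sm[OF assms(2)] sc3_hom hom_tq_left by blast
next
  fix c u v show "hom R3 c (g (u, sm1 c v)) (g (u, v))"
    using lin1_sm[OF assms(3)] sc3_hom hom_tq_left by blast
qed

lemma push3_lin: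
  assumes "teq3 sm1 sm1 sm1 L L'" "\<And>v w. lin1 (\<lambda>u. g (u, v, w))" "\<And>u w. lin1 (\<lambda>v. g (u, v, w))"
    "\<And>u v. lin1 (\<lambda>w. g (u, v, w))"
  shows "concat (map g L) \<approx> concat (map g L')"
proof (rule push3[OF assms(1)])
  fix u u' v w show "g (u + u', v, w) \<approx> g (u, v, w) @ g (u', v, w)" using lin1_add[OF assms(2)] by blast
next
  fix u v v' w show "g (u, v + v', w) \<approx> g (u, v, w) @ g (u, v', w)" using lin1_add[OF assms(3)] by blast
next
  fix u v w w' show "g (u, v, w + w') \<approx> g (u, v, w) @ g (u, v, w')" using lin1_add[OF assms(4)] by blast
next
  fix c u v w show "hom R3 c (g (sm1 c u, v, w)) (g (u, v, w))"
    using lin1_sm[OF assms(2)] sc3_hom hom_tq_left by blast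
next
  fix c u v w show "hom R3 c (g (u, sm1 c v, w)) (g (u, v, w))"
    using lin1_sm[OF assms(3)] sc3_hom hom_tq_left by blast
next
  fix c u v w show "hom R3 c (g (u, v, sm1 c w)) (g (u, v, w))"
    using lin1_sm[OF assms(4)] sc3_hom hom_tq_left by blast
qed

end


context QF begin

lemma map_as_concat: "map f A = concat (map (\<lambda>p. [f p]) A)"
  by (induction A) auto

lemma cm_single_case: "concat (map (\<lambda>(b, x). [f b x]) A) = map (\<lambda>(b, x). f b x) A"
  by (induction A) auto

lemma leg12_tq: assumes "teq2 smB sm2 A B" shows "leg12 A \<approx> leg12 B"
proof -
  have "concat (map (\<lambda>(b, x). [(b, x, 1)]) A) \<approx> concat (map (\<lambda>(b, x). [(b, x, 1)]) B)"
    by (rule push2[OF assms]) (auto simp: g3_1 g3_2 h3_1 h3_2)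
  then show ?thesis by (simp only: leg12_def cm_single_case)
qed

lemma leg13_tq: assumes "teq2 smB sm2 A B" shows "leg13 A \<approx> leg13 B"
proof -
  have "concat (map (\<lambda>(b, x). [(b, 1, x)]) A) \<approx> concat (map (\<lambda>(b, x). [(b, 1, x)]) B)"
    by (rule push2[OF assms]) (auto simp: g3_1 g3_3 h3_1 h3_3)
  then show ?thesis by (simp only: leg13_def cm_single_case)
qed

lemma embed: assumes "teq2 sm2 sm2 L L'"
  shows "map (\<lambda>(y, z). (b, y, z)) L \<approx> map (\<lambda>(y, z). (b, y, z)) L'"
proof -
  have "concat (map (\<lambda>(y, z). [(b, y, z)]) L) \<approx> concat (map (\<lambda>(y, z). [(b, y, z)]) L')"
    by (rule push2[OF assms]) (auto simp: g3_2 g3_3 h3_2 h3_3)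
  then show ?thesis by (simp only: cm_single_case)
qed

definition G :: "'b \<times> 'a2 \<Rightarrow> ('b \<times> 'a2 \<times> 'a2) list" where
  "G p = map (\<lambda>(y, z). (fst p, y, z)) (D2 (snd p))"

lemma G_simp: "G (b, x) = map (\<lambda>(y, z). (b, y, z)) (D2 x)"
  by (simp add: G_def)

lemma id_tensor_G: "id_tensor D2 A = concat (map G A)"
  unfolding id_tensor_def G_def[abs_def] by (induction A) auto

lemma idt_tq: assumes "teq2 smB sm2 A B" shows "id_tensor D2 A \<approx> id_tensor D2 B"
  unfolding id_tensor_G
proof (rule push2[OF assms])
  fix u u' v show "G (u + u', v) \<approx> G (u, v) @ G (u', v)"
    unfolding G_simp by (rule tq_map_add) (auto simp: split_beta g3_1)
next
  fix u v v' show "G (u, v + v') \<approx> G (u, v) @ G (u, v')"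
    unfolding G_simp using embed[OF D2_add] by simp
next
  fix c u v show "hom R3 c (G (smB c u, v)) (G (u, v))"
    unfolding G_simp by (rule hom_map) (auto simp: split_beta h3_1)
next
  fix c u v
  have "hom R3 c (map (\<lambda>(y, z). (u, y, z)) (scale2 sm2 c (D2 v))) (G (u, v))"
    unfolding G_simp scale2_def by (simp add: map_as_concat[symmetric] comp_def split_beta, rule hom_map)
      (auto simp: split_beta h3_2)
  then show "hom R3 c (G (u, sm2 c v)) (G (u, v))"
    unfolding G_simp using embed[OF D2_sm] hom_tq_left by fastforce
qed

end


context QF begin

lemma mult2_conc: "mult2 A B = concat (map (\<lambda>p. map (\<lambda>q. (fst p * fst q, snd p * snd q)) B) A)"
  by (simp add: mult2_def case_prod_unfold)

lemma G_mult_exact: "map (\<lambda>(y, z). (b * b', y, z)) (mult2 L L') =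
   mult3 (map (\<lambda>(y, z). (b, y, z)) L) (map (\<lambda>(y, z). (b', y, z)) L')"
  by (simp add: mult2_def mult3_def split_beta map_concat comp_def)

lemma G_mult: "G (b * b', x * x') \<approx> mult3 (G (b, x)) (G (b', x'))"
  unfolding G_simp by (subst G_mult_exact[symmetric]) (rule embed[OF D2_mult])

lemma idt_mult: "id_tensor D2 (mult2 A B) \<approx> mult3 (id_tensor D2 A) (id_tensor D2 B)"
proof -
  have "id_tensor D2 (mult2 A B) = concat (map (\<lambda>p. concat (map (\<lambda>q. G (fst p * fst q, snd p * snd q)) B)) A)"
    unfolding id_tensor_G mult2_conc by (induction A) (simp_all add: comp_def)
  also have "\<dots> \<approx> concat (map (\<lambda>p. concat (map (\<lambda>q. mult3 (G p) (G q)) B)) A)"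
    by (intro tq_concat_map) (metis G_mult prod.collapse)
  also have "\<dots> \<approx> concat (map (\<lambda>p. mult3 (G p) (concat (map G B))) A)"
    by (intro tq_concat_map tq_mset) (simp add: mult3_concat2)
  also have "\<dots> = mult3 (id_tensor D2 A) (id_tensor D2 B)"
    by (simp add: id_tensor_G mult3_concat)
  finally show ?thesis .
qed

definition X12 :: "'a1 \<Rightarrow> ('b \<times> 'a2 \<times> 'a2) list" where "X12 x = leg12 (\<alpha> x)"
definition X13 :: "'a1 \<Rightarrow> ('b \<times> 'a2 \<times> 'a2) list" where "X13 x = leg13 (\<alpha> x)"
definition T :: "'a1 \<Rightarrow> ('b \<times> 'a2 \<times> 'a2) list" where "T x = id_tensor D2 (\<alpha> x)"

lemma leg12_append: "leg12 (A @ B) = leg12 A @ leg12 B" by (simp add: leg12_def)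
lemma leg13_append: "leg13 (A @ B) = leg13 A @ leg13 B" by (simp add: leg13_def)
lemma leg12_sc: "leg12 (scale2 smB c A) = sc3 c (leg12 A)"
  by (simp add: leg12_def scale2_def sc3_def split_beta)
lemma leg13_sc: "leg13 (scale2 smB c A) = sc3 c (leg13 A)"
  by (simp add: leg13_def scale2_def sc3_def split_beta)
lemma leg12_mult: "leg12 (mult2 (A :: ('b \<times> 'a2) list) B) = mult3 (leg12 A) (leg12 B)"
  by (simp add: leg12_def mult2_def mult3_def split_beta map_concat comp_def)
lemma leg13_mult: "leg13 (mult2 (A :: ('b \<times> 'a2) list) B) = mult3 (leg13 A) (leg13 B)"
  by (simp add: leg13_def mult2_def mult3_def split_beta map_concat comp_def)

lemma lin_X12: "lin1 X12"
  unfolding X12_def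
  by (rule lin1I) (metis al_add leg12_tq leg12_append, metis al_sm leg12_tq leg12_sc)
lemma lin_X13: "lin1 X13"
  unfolding X13_def
  by (rule lin1I) (metis al_add leg13_tq leg13_append, metis al_sm leg13_tq leg13_sc)

lemma X12_mult: "X12 (x * y) \<approx> mult3 (X12 x) (X12 y)"
  unfolding X12_def by (metis al_mult leg12_tq leg12_mult)
lemma X13_mult: "X13 (x * y) \<approx> mult3 (X13 x) (X13 y)"
  unfolding X13_def by (metis al_mult leg13_tq leg13_mult)
lemma X12_one: "X12 1 \<approx> [(oneB, 1, 1)]"
  unfolding X12_def using leg12_tq[OF al_one] by (simp add: leg12_def)
lemma X13_one: "X13 1 \<approx> [(oneB, 1, 1)]"
  unfolding X13_def using leg13_tq[OF al_one] by (simp add: leg13_def)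
lemma T_mult: "T (x * y) \<approx> mult3 (T x) (T y)"
  unfolding T_def by (meson al_mult idt_tq idt_mult tq_trans)

lemma lin_S: "lin1 Y \<Longrightarrow> lin1 (\<lambda>x. Y (S1 x))"
  by (simp add: lin1_def S1_add S1_sm)

lemma hypP: "concat (map (\<lambda>(u, v). mult3 (X12 u) (X13 v)) (D1 a)) \<approx> T a"
  using al_hyp[of a] by (simp add: teq3_tq X12_def X13_def T_def)

end


context QF begin

lemma AS: "concat (map (\<lambda>(b1, b2). mult3 (X12 (S1 b1)) (X12 b2)) (D1 u)) \<approx> sc3 (eps1 u) [(oneB, 1, 1)]"
proof -
  have "concat (map (\<lambda>(b1, b2). mult3 (X12 (S1 b1)) (X12 b2)) (D1 u))
      \<approx> concat (map (\<lambda>(b1, b2). X12 (S1 b1 * b2)) (D1 u))"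
    by (intro tq_concat_map) (auto intro: tq_sym X12_mult)
  also have "\<dots> = concat (map X12 (map (\<lambda>(b1, b2). S1 b1 * b2) (D1 u)))"
    by (simp add: comp_def case_prod_unfold)
  also have "\<dots> \<approx> X12 (sum_list (map (\<lambda>(b1, b2). S1 b1 * b2) (D1 u)))"
    by (rule tq_sym, rule lin_sum[OF lin_X12])
  also have "\<dots> = X12 (sm1 (eps1 u) 1)" using anti_l[of u] by simp
  also have "\<dots> \<approx> sc3 (eps1 u) (X12 1)" by (rule lin1_sm[OF lin_X12])
  also have "\<dots> \<approx> sc3 (eps1 u) [(oneB, 1, 1)]" by (rule sc3_cong[OF X12_one])
  finally show ?thesis .
qed

lemma AS': "concat (map (\<lambda>(b1, b2). mult3 (X13 b1) (X13 (S1 b2))) (D1 u)) \<approx> sc3 (eps1 u) [(oneB, 1, 1)]"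
proof -
  have "concat (map (\<lambda>(b1, b2). mult3 (X13 b1) (X13 (S1 b2))) (D1 u))
      \<approx> concat (map (\<lambda>(b1, b2). X13 (b1 * S1 b2)) (D1 u))"
    by (intro tq_concat_map) (auto intro: tq_sym X13_mult)
  also have "\<dots> = concat (map X13 (map (\<lambda>(b1, b2). b1 * S1 b2) (D1 u)))"
    by (simp add: comp_def case_prod_unfold)
  also have "\<dots> \<approx> X13 (sum_list (map (\<lambda>(b1, b2). b1 * S1 b2) (D1 u)))"
    by (rule tq_sym, rule lin_sum[OF lin_X13])
  also have "\<dots> = X13 (sm1 (eps1 u) 1)" using anti_r[of u] by simp
  also have "\<dots> \<approx> sc3 (eps1 u) (X13 1)" by (rule lin1_sm[OF lin_X13])
  also have "\<dots> \<approx> sc3 (eps1 u) [(oneB, 1, 1)]" by (rule sc3_cong[OF X13_one])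
  finally show ?thesis .
qed

lemma cnt_l: assumes "lin1 Y" shows "Y a \<approx> concat (map (\<lambda>(u, v). sc3 (eps1 u) (Y v)) (D1 a))"
proof -
  have "Y a = Y (sum_list (map (\<lambda>(u, v). sm1 (eps1 u) v) (D1 a)))" using counit_l[of a] by simp
  also have "\<dots> \<approx> concat (map Y (map (\<lambda>(u, v). sm1 (eps1 u) v) (D1 a)))" by (rule lin_sum[OF assms])
  also have "\<dots> \<approx> concat (map (\<lambda>(u, v). sc3 (eps1 u) (Y v)) (D1 a))"
    by (simp add: comp_def case_prod_unfold) (intro tq_concat_map lin1_sm[OF assms])
  finally show ?thesis .
qed

lemma cnt_r: assumes "lin1 Y" shows "Y a \<approx> concat (map (\<lambda>(u, v). sc3 (eps1 v) (Y u)) (D1 a))"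
proof -
  have "Y a = Y (sum_list (map (\<lambda>(u, v). sm1 (eps1 v) u) (D1 a)))" using counit_r[of a] by simp
  also have "\<dots> \<approx> concat (map Y (map (\<lambda>(u, v). sm1 (eps1 v) u) (D1 a)))" by (rule lin_sum[OF assms])
  also have "\<dots> \<approx> concat (map (\<lambda>(u, v). sc3 (eps1 v) (Y u)) (D1 a))"
    by (simp add: comp_def case_prod_unfold) (intro tq_concat_map lin1_sm[OF assms])
  finally show ?thesis .
qed

lemma cm_map_helper: "concat (map g (map (\<lambda>(y, z). (u, y, z)) L)) = concat (map (\<lambda>(y, z). g (u, y, z)) L)"
  by (induction L) auto
lemma cm_map_helper2: "concat (map g (map (\<lambda>(y, z). (y, z, v)) L)) = concat (map (\<lambda>(y, z). g (y, z, v)) L)"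
  by (induction L) auto

lemma cm_id_tensor: "concat (map g (id_tensor D1 L)) =
    concat (map (\<lambda>(u, v). concat (map (\<lambda>(y, z). g (u, y, z)) (D1 v))) L)"
  by (induction L) (auto simp: id_tensor_def cm_map_helper comp_def)

lemma cm_tensor_id: "concat (map g (tensor_id D1 L)) =
    concat (map (\<lambda>(u, v). concat (map (\<lambda>(y, z). g (y, z, v)) (D1 u))) L)"
  by (induction L) (auto simp: tensor_id_def cm_map_helper2 comp_def case_prod_unfold)

lemma CL:
  assumes Y: "lin1 Y"
  shows "concat (map (\<lambda>(u, v). concat (map (\<lambda>(c1, c2). mult3 (mult3 (X12 (S1 u)) (X12 c1)) (Y c2)) (D1 v))) (D1 a)) \<approx> Y a"
proof -
  define g3 where "g3 = (\<lambda>(x, y, z). mult3 (mult3 (X12 (S1 x)) (X12 y)) (Y z))"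
  have "concat (map (\<lambda>(u, v). concat (map (\<lambda>(c1, c2). mult3 (mult3 (X12 (S1 u)) (X12 c1)) (Y c2)) (D1 v))) (D1 a))
      = concat (map g3 (id_tensor D1 (D1 a)))"
    by (simp add: cm_id_tensor g3_def)
  also have "\<dots> \<approx> concat (map g3 (tensor_id D1 (D1 a)))"
  proof (rule tq_sym, rule push3_lin[OF coassoc1])
    fix v w show "lin1 (\<lambda>u. g3 (u, v, w))"
      unfolding g3_def using lin_mult_r[OF lin_mult_r[OF lin_S[OF lin_X12]]] by simp
  next
    fix u w show "lin1 (\<lambda>v. g3 (u, v, w))"
      unfolding g3_def using lin_mult_r[OF lin_mult_l[OF lin_X12]] by simp
  next
    fix u v show "lin1 (\<lambda>w. g3 (u, v, w))"
      unfolding g3_def using lin_mult_l[OF Y] by simp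
  qed
  also have "\<dots> = concat (map (\<lambda>(u, v). mult3 (concat (map (\<lambda>(b1, b2). mult3 (X12 (S1 b1)) (X12 b2)) (D1 u))) (Y v)) (D1 a))"
    by (simp add: cm_tensor_id g3_def mult3_concat case_prod_unfold)
  also have "\<dots> \<approx> concat (map (\<lambda>(u, v). mult3 (sc3 (eps1 u) [(oneB, 1, 1)]) (Y v)) (D1 a))"
    by (intro tq_concat_map) (auto intro: mult3_cong_l AS)
  also have "\<dots> = concat (map (\<lambda>(u, v). sc3 (eps1 u) (Y v)) (D1 a))"
    by (simp add: mult3_sc3_l mult3_unit_l)
  also have "\<dots> \<approx> Y a" by (rule tq_sym, rule cnt_l[OF Y])
  finally show ?thesis .
qed

lemma CR:
  assumes Z: "lin1 Z"
  shows "concat (map (\<lambda>(u, v). concat (map (\<lambda>(d1, d2). mult3 (mult3 (Z d1) (X13 d2)) (X13 (S1 v))) (D1 u))) (D1 a)) \<approx> Z a"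
proof -
  define g3 where "g3 = (\<lambda>(x, y, z). mult3 (mult3 (Z x) (X13 y)) (X13 (S1 z)))"
  have "concat (map (\<lambda>(u, v). concat (map (\<lambda>(d1, d2). mult3 (mult3 (Z d1) (X13 d2)) (X13 (S1 v))) (D1 u))) (D1 a))
      = concat (map g3 (tensor_id D1 (D1 a)))"
    by (simp add: cm_tensor_id g3_def)
  also have "\<dots> \<approx> concat (map g3 (id_tensor D1 (D1 a)))"
  proof (rule push3_lin[OF coassoc1])
    fix v w show "lin1 (\<lambda>u. g3 (u, v, w))"
      unfolding g3_def using lin_mult_r[OF lin_mult_r[OF Z]] by simp
  next
    fix u w show "lin1 (\<lambda>v. g3 (u, v, w))"
      unfolding g3_def using lin_mult_r[OF lin_mult_l[OF lin_X13]] by simp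
  next
    fix u v show "lin1 (\<lambda>w. g3 (u, v, w))"
      unfolding g3_def using lin_mult_l[OF lin_S[OF lin_X13]] by simp
  qed
  also have "\<dots> = concat (map (\<lambda>(u, v). concat (map (\<lambda>(e1, e2). mult3 (Z u) (mult3 (X13 e1) (X13 (S1 e2)))) (D1 v))) (D1 a))"
    by (simp add: cm_id_tensor g3_def mult3_assoc)
  also have "\<dots> \<approx> concat (map (\<lambda>(u, v). mult3 (Z u) (concat (map (\<lambda>(e1, e2). mult3 (X13 e1) (X13 (S1 e2))) (D1 v)))) (D1 a))"
    by (intro tq_concat_map tq_mset) (simp add: mult3_concat2 case_prod_unfold)
  also have "\<dots> \<approx> concat (map (\<lambda>(u, v). mult3 (Z u) (sc3 (eps1 v) [(oneB, 1, 1)])) (D1 a))"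
    by (intro tq_concat_map) (auto intro: mult3_cong_r AS')
  also have "\<dots> = concat (map (\<lambda>(u, v). sc3 (eps1 v) (Z u)) (D1 a))"
    by (simp add: mult3_sc3_r mult3_unit_r)
  also have "\<dots> \<approx> Z a" by (rule tq_sym, rule cnt_r[OF Z])
  finally show ?thesis .
qed

end



lemma cc_map: "concat (concat (map (\<lambda>x. map (f x) B) A)) = concat (map (\<lambda>x. concat (map (f x) B)) A)"
  by (induction A) auto

lemma mset_cm_app: "mset (concat (map (\<lambda>y. g y @ h y) B)) = mset (concat (map g B)) + mset (concat (map h B))"
  by (induction B) auto

lemma mset_swap: "mset (concat (map (\<lambda>x. concat (map (\<lambda>y. f x y) B)) A)) =
  mset (concat (map (\<lambda>y. concat (map (\<lambda>x. f x y) A)) B))"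
  by (induction A) (auto simp: mset_cm_app)

lemma tq_swap: "tq R (concat (map (\<lambda>x. concat (map (\<lambda>y. f x y) B)) A))
  (concat (map (\<lambda>y. concat (map (\<lambda>x. f x y) A)) B))"
  by (rule tq_mset[OF mset_swap])

context QF begin

lemma E1: "X13 a \<approx> concat (map (\<lambda>(u, v). mult3 (X12 (S1 u)) (T v)) (D1 a))"
proof -
  have "X13 a \<approx> concat (map (\<lambda>(u, v). concat (map (\<lambda>(c1, c2). mult3 (mult3 (X12 (S1 u)) (X12 c1)) (X13 c2)) (D1 v))) (D1 a))"
    by (rule tq_sym, rule CL[OF lin_X13])
  also have "\<dots> = concat (map (\<lambda>(u, v). concat (map (\<lambda>(c1, c2). mult3 (X12 (S1 u)) (mult3 (X12 c1) (X13 c2))) (D1 v))) (D1 a))"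
    by (simp add: mult3_assoc)
  also have "\<dots> \<approx> concat (map (\<lambda>(u, v). mult3 (X12 (S1 u)) (concat (map (\<lambda>(c1, c2). mult3 (X12 c1) (X13 c2)) (D1 v)))) (D1 a))"
    by (intro tq_concat_map tq_mset) (simp add: mult3_concat2 case_prod_unfold)
  also have "\<dots> \<approx> concat (map (\<lambda>(u, v). mult3 (X12 (S1 u)) (T v)) (D1 a))"
    by (intro tq_concat_map) (auto intro: mult3_cong_r hypP)
  finally show ?thesis .
qed

lemma E2: "X12 a \<approx> concat (map (\<lambda>(u, v). mult3 (T u) (X13 (S1 v))) (D1 a))"
proof -
  have "X12 a \<approx> concat (map (\<lambda>(u, v). concat (map (\<lambda>(d1, d2). mult3 (mult3 (X12 d1) (X13 d2)) (X13 (S1 v))) (D1 u))) (D1 a))"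
    by (rule tq_sym, rule CR[OF lin_X12])
  also have "\<dots> = concat (map (\<lambda>(u, v). mult3 (concat (map (\<lambda>(d1, d2). mult3 (X12 d1) (X13 d2)) (D1 u))) (X13 (S1 v))) (D1 a))"
    by (simp add: mult3_concat case_prod_unfold)
  also have "\<dots> \<approx> concat (map (\<lambda>(u, v). mult3 (T u) (X13 (S1 v))) (D1 a))"
    by (intro tq_concat_map) (auto intro: mult3_cong_l hypP)
  finally show ?thesis .
qed

lemma Pexp: "T (x * y) \<approx> concat (map (\<lambda>c. concat (map (\<lambda>d.
    mult3 (mult3 (mult3 (X12 (fst c)) (X12 (fst d))) (X13 (snd c))) (X13 (snd d))) (D1 y))) (D1 x))"
proof -
  define g2 where "g2 = (\<lambda>(u, v). mult3 (X12 u) (X13 v))"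
  have "T (x * y) \<approx> concat (map g2 (D1 (x * y)))"
    unfolding g2_def by (rule tq_sym, rule hypP)
  also have "\<dots> \<approx> concat (map g2 (mult2 (D1 x) (D1 y)))"
  proof (rule push2_lin[OF D1_mult])
    fix v show "lin1 (\<lambda>u. g2 (u, v))" unfolding g2_def using lin_mult_r[OF lin_X12] by simp
  next
    fix u show "lin1 (\<lambda>v. g2 (u, v))" unfolding g2_def using lin_mult_l[OF lin_X13] by simp
  qed
  also have "\<dots> = concat (map (\<lambda>c. concat (map (\<lambda>d. mult3 (X12 (fst c * fst d)) (X13 (snd c * snd d))) (D1 y))) (D1 x))"
    by (simp add: mult2_conc g2_def map_concat comp_def cc_map)
  also have "\<dots> \<approx> concat (map (\<lambda>c. concat (map (\<lambda>d.
    mult3 (mult3 (mult3 (X12 (fst c)) (X12 (fst d))) (X13 (snd c))) (X13 (snd d))) (D1 y))) (D1 x))"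
    by (intro tq_concat_map, subst mult3_assoc, rule mult3_cong[OF X12_mult X13_mult])
  finally show ?thesis .
qed

end


context QF begin

lemma main_comm: "mult3 (X13 a) (X12 a') \<approx> mult3 (X12 a') (X13 a)"
proof -
  define Yf where "Yf d v' x = mult3 (mult3 (mult3 (X12 (fst d)) (X13 x)) (X13 (snd d))) (X13 (S1 v'))" for d v' x
  define K where "K u v' c d = mult3 (mult3 (X12 (S1 u)) (X12 (fst c))) (Yf d v' (snd c))" for u v' c d
  have linY: "lin1 (Yf d v')" for d v'
    unfolding Yf_def by (intro lin_mult_r lin_mult_l lin_X13)
  have s3: "mult3 (mult3 (X12 (S1 u)) (T v)) (mult3 (T u') (X13 (S1 v'))) \<approx>
     concat (map (\<lambda>c. concat (map (\<lambda>d. K u v' c d) (D1 u'))) (D1 v))" for u v u' v'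
  proof -
    let ?P = "concat (map (\<lambda>c. concat (map (\<lambda>d.
       mult3 (mult3 (mult3 (X12 (fst c)) (X12 (fst d))) (X13 (snd c))) (X13 (snd d))) (D1 u'))) (D1 v))"
    have "mult3 (mult3 (X12 (S1 u)) (T v)) (mult3 (T u') (X13 (S1 v')))
        = mult3 (X12 (S1 u)) (mult3 (mult3 (T v) (T u')) (X13 (S1 v')))"
      by (simp add: mult3_assoc)
    also have "\<dots> \<approx> mult3 (X12 (S1 u)) (mult3 (T (v * u')) (X13 (S1 v')))"
      by (intro mult3_cong_r mult3_cong_l tq_sym[OF T_mult])
    also have "\<dots> \<approx> mult3 (X12 (S1 u)) (mult3 ?P (X13 (S1 v')))"
      by (intro mult3_cong_r mult3_cong_l Pexp)
    also have "\<dots> = mult3 (X12 (S1 u)) (concat (map (\<lambda>c. concat (map (\<lambda>d.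
       mult3 (mult3 (mult3 (mult3 (X12 (fst c)) (X12 (fst d))) (X13 (snd c))) (X13 (snd d))) (X13 (S1 v'))) (D1 u'))) (D1 v)))"
      by (simp add: mult3_concat)
    also have "\<dots> \<approx> concat (map (\<lambda>c. mult3 (X12 (S1 u)) (concat (map (\<lambda>d.
       mult3 (mult3 (mult3 (mult3 (X12 (fst c)) (X12 (fst d))) (X13 (snd c))) (X13 (snd d))) (X13 (S1 v'))) (D1 u')))) (D1 v))"
      by (rule tq_mset[OF mult3_concat2])
    also have "\<dots> \<approx> concat (map (\<lambda>c. concat (map (\<lambda>d. mult3 (X12 (S1 u)) (
       mult3 (mult3 (mult3 (mult3 (X12 (fst c)) (X12 (fst d))) (X13 (snd c))) (X13 (snd d))) (X13 (S1 v')))) (D1 u'))) (D1 v))"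
      by (intro tq_concat_map tq_mset mult3_concat2)
    also have "\<dots> = concat (map (\<lambda>c. concat (map (\<lambda>d. K u v' c d) (D1 u'))) (D1 v))"
      by (simp add: K_def Yf_def mult3_assoc)
    finally show ?thesis .
  qed
  have "mult3 (X13 a) (X12 a') \<approx> mult3 (concat (map (\<lambda>(u, v). mult3 (X12 (S1 u)) (T v)) (D1 a)))
      (concat (map (\<lambda>(u, v). mult3 (T u) (X13 (S1 v))) (D1 a')))"
    by (intro mult3_cong E1 E2)
  also have "\<dots> \<approx> concat (map (\<lambda>p. concat (map (\<lambda>q. mult3 (mult3 (X12 (S1 (fst p))) (T (snd p)))
      (mult3 (T (fst q)) (X13 (S1 (snd q))))) (D1 a'))) (D1 a))"
    by (simp add: mult3_concat case_prod_unfold) (intro tq_concat_map tq_mset, simp add: mult3_concat2)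
  also have "\<dots> \<approx> concat (map (\<lambda>p. concat (map (\<lambda>q. concat (map (\<lambda>c. concat (map (\<lambda>d.
      K (fst p) (snd q) c d) (D1 (fst q)))) (D1 (snd p)))) (D1 a'))) (D1 a))"
    by (intro tq_concat_map s3)
  also have "\<dots> \<approx> concat (map (\<lambda>p. concat (map (\<lambda>q. concat (map (\<lambda>d. concat (map (\<lambda>c.
      K (fst p) (snd q) c d) (D1 (snd p)))) (D1 (fst q)))) (D1 a'))) (D1 a))"
    by (intro tq_concat_map tq_swap)
  also have "\<dots> \<approx> concat (map (\<lambda>q. concat (map (\<lambda>p. concat (map (\<lambda>d. concat (map (\<lambda>c.
      K (fst p) (snd q) c d) (D1 (snd p)))) (D1 (fst q)))) (D1 a))) (D1 a'))"
    by (rule tq_swap)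
  also have "\<dots> \<approx> concat (map (\<lambda>q. concat (map (\<lambda>d. concat (map (\<lambda>p. concat (map (\<lambda>c.
      K (fst p) (snd q) c d) (D1 (snd p)))) (D1 a))) (D1 (fst q)))) (D1 a'))"
    by (intro tq_concat_map tq_swap)
  also have "\<dots> \<approx> concat (map (\<lambda>q. concat (map (\<lambda>d. Yf d (snd q) a) (D1 (fst q)))) (D1 a'))"
  proof (intro tq_concat_map)
    fix q d
    have "concat (map (\<lambda>(u, v). concat (map (\<lambda>(c1, c2). mult3 (mult3 (X12 (S1 u)) (X12 c1)) (Yf d (snd q) c2)) (D1 v))) (D1 a))
      \<approx> Yf d (snd q) a" by (rule CL[OF linY])
    then show "concat (map (\<lambda>p. concat (map (\<lambda>c. K (fst p) (snd q) c d) (D1 (snd p)))) (D1 a)) \<approx> Yf d (snd q) a"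
      by (simp add: K_def case_prod_unfold)
  qed
  also have "\<dots> \<approx> mult3 (X12 a') (X13 a)"
  proof -
    have "concat (map (\<lambda>(u, v). concat (map (\<lambda>(d1, d2). mult3 (mult3 ((\<lambda>x. mult3 (X12 x) (X13 a)) d1) (X13 d2)) (X13 (S1 v))) (D1 u))) (D1 a'))
      \<approx> (\<lambda>x. mult3 (X12 x) (X13 a)) a'" by (rule CR[OF lin_mult_r[OF lin_X12]])
    then show ?thesis by (simp add: Yf_def case_prod_unfold)
  qed
  finally show ?thesis .
qed

end

theorem theorem3p5:
  fixes sm1 :: "'k::field \<Rightarrow> 'a1::ring_1 \<Rightarrow> 'a1"
    and D1 :: "'a1 \<Rightarrow> ('a1 \<times> 'a1) list" and S1 :: "'a1 \<Rightarrow> 'a1" and eps1 :: "'a1 \<Rightarrow> 'k"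
    and sm2 :: "'k \<Rightarrow> 'a2::ring_1 \<Rightarrow> 'a2"
    and D2 :: "'a2 \<Rightarrow> ('a2 \<times> 'a2) list" and S2 :: "'a2 \<Rightarrow> 'a2" and eps2 :: "'a2 \<Rightarrow> 'k"
    and smB :: "'k \<Rightarrow> 'b::ring \<Rightarrow> 'b" and oneB :: 'b
    and \<alpha> :: "'a1 \<Rightarrow> ('b \<times> 'a2) list"
  assumes "hopf_algebra sm1 D1 S1 eps1"
    and "hopf_algebra sm2 D2 S2 eps2"
    and "unital_kalg smB oneB"
    and "quantum_family_hom sm1 D1 smB oneB sm2 D2 \<alpha>"
  shows "\<forall>a a'. teq3 smB sm2 sm2 (mult3 (leg12 (\<alpha> a)) (leg13 (\<alpha> a')))
                                   (mult3 (leg13 (\<alpha> a')) (leg12 (\<alpha> a)))"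
proof -
  interpret QF sm1 D1 S1 eps1 sm2 D2 S2 eps2 smB oneB \<alpha>
    using assms by unfold_locales
  show ?thesis
  proof (intro allI)
    fix a a'
    have "mult3 (X12 a) (X13 a') \<approx> mult3 (X13 a') (X12 a)"
      by (rule tq_sym[OF main_comm])
    then show "teq3 smB sm2 sm2 (mult3 (leg12 (\<alpha> a)) (leg13 (\<alpha> a')))
                                   (mult3 (leg13 (\<alpha> a')) (leg12 (\<alpha> a)))"
      by (simp only: teq3_tq X12_def X13_def)
  qed
qed

end
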